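(* Let $n\geq 2$. Every countable dense $n$-dimensional partial order with realizers is isomorphic to $\mathbf{D}_{n,<_1,\ldots,<_n}=(D_n,<,<_1,\ldots,<_n)$, and $\mathbf{D}_{n,<_1,\ldots,<_n}$ is itself a countable dense $n$-dimensional partial order with realizers; i.e. it is the unique such structure up to isomorphism.
   Context: Fix $n\geq 2$ and a set $D_n\subseteq\mathbb{Q}^n$ which is dense in $\mathbb{Q}^n$ (product topology) and such that no two distinct points of $D_n$ share a common coordinate. On $D_n$, $<$ is the product order ($\mathbf{a}<\mathbf{b}$ iff $a_i\leq b_i$ for all $i$ and $\mathbf{a}\neq\mathbf{b}$) and $<_i$ is the $i$th coordinate order ($\mathbf{a}<_i\mathbf{b}$ iff $a_i<b_i$). An $n$-dimensional partial order with realizers is a structure $(P,<,<_1,\ldots,<_n)$ ($P$ nonempty) where $<_1,\ldots,<_n$ are strict linear orders on $P$ and $a<b$ iff $a<_ib$ for all $i\leq n$. It is dense (i.e. a model of the theory $\mathsf{DPO}_{n,<_1,\ldots,<_n}$) if every region determined by finitely many points is nonempty, precisely: for every nonempty finite $F\subseteq P$ and every choice, for each $i\leq n$, of a "gap" of $F$ in $<_i$ — namely a pair $(l_i,r_i)$ with $l_i\in F\cup\{-\infty\}$, $r_i\in F\cup\{+\infty\}$, $l_i<_i r_i$ and no element of $F$ strictly $<_i$-between $l_i$ and $r_i$ — there is $u\in P$ with $l_i<_iu<_ir_i$ for all $i\leq n$ (comparisons with $\pm\infty$ being automatically true). Isomorphisms preserve and reflect all of $<,<_1,\ldots,<_n$.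 *)

theory Defs
  imports Main "HOL-Library.Countable_Set"
begin

text \<open>A structure is given by a carrier P, a relation lt (the partial order <)
  and realizers R i for i < n (the linear orders <_1..<_n, indexed from 0).\<close>

definition strict_linear_on :: "'a set \<Rightarrow> ('a \<Rightarrow> 'a \<Rightarrow> bool) \<Rightarrow> bool" where
  "strict_linear_on P r \<longleftrightarrow>
     (\<forall>a\<in>P. \<not> r a a) \<and>
     (\<forall>a\<in>P. \<forall>b\<in>P. \<forall>c\<in>P. r a b \<longrightarrow> r b c \<longrightarrow> r a c) \<and>
     (\<forall>a\<in>P. \<forall>b\<in>P. a \<noteq> b \<longrightarrow> r a b \<or> r b a)"

definition npo :: "nat \<Rightarrow> 'a set \<Rightarrow> ('a \<Rightarrow> 'a \<Rightarrow> bool) \<Rightarrow> (nat \<Rightarrow> 'a \<Rightarrow> 'a \<Rightarrow> bool) \<Rightarrow> bool" where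
  "npo n P lt R \<longleftrightarrow> P \<noteq> {} \<and> (\<forall>i<n. strict_linear_on P (R i)) \<and>
     (\<forall>a\<in>P. \<forall>b\<in>P. lt a b \<longleftrightarrow> (\<forall>i<n. R i a b))"

text \<open>Endpoints of gaps: None stands for -infinity (left) resp. +infinity (right).\<close>

definition above_l :: "('a \<Rightarrow> 'a \<Rightarrow> bool) \<Rightarrow> 'a option \<Rightarrow> 'a \<Rightarrow> bool" where
  "above_l r l u = (case l of None \<Rightarrow> True | Some a \<Rightarrow> r a u)"

definition below_r :: "('a \<Rightarrow> 'a \<Rightarrow> bool) \<Rightarrow> 'a \<Rightarrow> 'a option \<Rightarrow> bool" where
  "below_r r u rt = (case rt of None \<Rightarrow> True | Some b \<Rightarrow> r u b)"

definition is_gap :: "('a \<Rightarrow> 'a \<Rightarrow> bool) \<Rightarrow> 'a set \<Rightarrow> 'a option \<Rightarrow> 'a option \<Rightarrow> bool" where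
  "is_gap r F l rt \<longleftrightarrow>
     l \<in> Some ` F \<union> {None} \<and> rt \<in> Some ` F \<union> {None} \<and>
     (case (l, rt) of (Some a, Some b) \<Rightarrow> r a b | _ \<Rightarrow> True) \<and>
     (\<forall>x\<in>F. \<not> (above_l r l x \<and> below_r r x rt))"

definition dense_npo :: "nat \<Rightarrow> 'a set \<Rightarrow> ('a \<Rightarrow> 'a \<Rightarrow> bool) \<Rightarrow> (nat \<Rightarrow> 'a \<Rightarrow> 'a \<Rightarrow> bool) \<Rightarrow> bool" where
  "dense_npo n P lt R \<longleftrightarrow> npo n P lt R \<and>
     (\<forall>F l rt. finite F \<and> F \<noteq> {} \<and> F \<subseteq> P \<and> (\<forall>i<n. is_gap (R i) F (l i) (rt i)) \<longrightarrow>
        (\<exists>u\<in>P. \<forall>i<n. above_l (R i) (l i) u \<and> below_r (R i) u (rt i)))"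

definition npo_iso :: "nat \<Rightarrow> 'a set \<Rightarrow> ('a \<Rightarrow> 'a \<Rightarrow> bool) \<Rightarrow> (nat \<Rightarrow> 'a \<Rightarrow> 'a \<Rightarrow> bool)
    \<Rightarrow> 'b set \<Rightarrow> ('b \<Rightarrow> 'b \<Rightarrow> bool) \<Rightarrow> (nat \<Rightarrow> 'b \<Rightarrow> 'b \<Rightarrow> bool) \<Rightarrow> ('a \<Rightarrow> 'b) \<Rightarrow> bool" where
  "npo_iso n P lt R Q lt' R' f \<longleftrightarrow> bij_betw f P Q \<and>
     (\<forall>a\<in>P. \<forall>b\<in>P. (lt a b \<longleftrightarrow> lt' (f a) (f b)) \<and> (\<forall>i<n. R i a b \<longleftrightarrow> R' i (f a) (f b)))"

definition npo_isomorphic :: "nat \<Rightarrow> 'a set \<Rightarrow> ('a \<Rightarrow> 'a \<Rightarrow> bool) \<Rightarrow> (nat \<Rightarrow> 'a \<Rightarrow> 'a \<Rightarrow> bool)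
    \<Rightarrow> 'b set \<Rightarrow> ('b \<Rightarrow> 'b \<Rightarrow> bool) \<Rightarrow> (nat \<Rightarrow> 'b \<Rightarrow> 'b \<Rightarrow> bool) \<Rightarrow> bool" where
  "npo_isomorphic n P lt R Q lt' R' \<longleftrightarrow> (\<exists>f. npo_iso n P lt R Q lt' R' f)"

definition rat_vecs :: "nat \<Rightarrow> rat list set" where
  "rat_vecs n = {x. length x = n}"

definition dense_in_Qn :: "nat \<Rightarrow> rat list set \<Rightarrow> bool" where
  "dense_in_Qn n D \<longleftrightarrow>
     (\<forall>a b. length a = n \<and> length b = n \<and> (\<forall>i<n. a ! i < b ! i) \<longrightarrow>
        (\<exists>d\<in>D. \<forall>i<n. a ! i < d ! i \<and> d ! i < b ! i))"

definition prod_lt :: "nat \<Rightarrow> rat list \<Rightarrow> rat list \<Rightarrow> bool" where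
  "prod_lt n a b \<longleftrightarrow> (\<forall>i<n. a ! i \<le> b ! i) \<and> a \<noteq> b"

definition coord_lt :: "nat \<Rightarrow> rat list \<Rightarrow> rat list \<Rightarrow> bool" where
  "coord_lt i a b \<longleftrightarrow> a ! i < b ! i"

end

theory Submission
  imports Defs
begin

lemma sl_irr: "strict_linear_on B r \<Longrightarrow> x \<in> B \<Longrightarrow> \<not> r x x"
  unfolding strict_linear_on_def by blast
lemma sl_trans: "strict_linear_on B r \<Longrightarrow> x \<in> B \<Longrightarrow> y \<in> B \<Longrightarrow> z \<in> B \<Longrightarrow> r x y \<Longrightarrow> r y z \<Longrightarrow> r x z"
  unfolding strict_linear_on_def by blast
lemma sl_tot: "strict_linear_on B r \<Longrightarrow> x \<in> B \<Longrightarrow> y \<in> B \<Longrightarrow> x \<noteq> y \<Longrightarrow> r x y \<or> r y x"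
  unfolding strict_linear_on_def by blast
lemma sl_asym: "strict_linear_on B r \<Longrightarrow> x \<in> B \<Longrightarrow> y \<in> B \<Longrightarrow> r x y \<Longrightarrow> \<not> r y x"
  unfolding strict_linear_on_def by blast
lemma sl_flip: "strict_linear_on B r \<Longrightarrow> strict_linear_on B (\<lambda>x y. r y x)"
  unfolding strict_linear_on_def by blast

lemma sl_max:
  assumes "strict_linear_on B r" "finite X" "X \<noteq> {}" "X \<subseteq> B"
  shows "\<exists>m\<in>X. \<forall>x\<in>X. x = m \<or> r x m"
  using assms(2,3,4)
proof (induction X rule: finite_ne_induct)
  case (singleton x) then show ?case by auto
next
  case (insert x F)
  then obtain m where m: "m\<in>F" "\<forall>y\<in>F. y = m \<or> r y m" by auto
  have mB: "m \<in> B" "x \<in> B" "F \<subseteq> B" using insert m by auto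
  show ?case
  proof (cases "r m x")
    case True
    have "y = x \<or> r y x" if y: "y \<in> insert x F" for y
    proof (cases "y = x")
      case False
      then have "y \<in> F" using y by simp
      then have "y = m \<or> r y m" using m by blast
      moreover have "y \<in> B" using \<open>y \<in> F\<close> mB by blast
      ultimately show ?thesis using True sl_trans[OF assms(1) _ mB(1) mB(2), of y] by blast
    qed simp
    then show ?thesis by blast
  next
    case False
    then have "x = m \<or> r x m" using sl_tot[OF assms(1) mB(1) mB(2)] by blast
    then have "\<forall>y\<in>insert x F. y = m \<or> r y m" using m by blast
    then show ?thesis using m by blast
  qed
qed

lemma sl_min:
  assumes "strict_linear_on B r" "finite X" "X \<noteq> {}" "X \<subseteq> B"
  shows "\<exists>m\<in>X. \<forall>x\<in>X. x = m \<or> r m x"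
  using sl_max[OF sl_flip[OF assms(1)] assms(2-4)] by blast

definition piso :: "nat \<Rightarrow> 'a set \<Rightarrow> (nat \<Rightarrow> 'a \<Rightarrow> 'a \<Rightarrow> bool) \<Rightarrow> 'b set \<Rightarrow> (nat \<Rightarrow> 'b \<Rightarrow> 'b \<Rightarrow> bool) \<Rightarrow> ('a \<times> 'b) set \<Rightarrow> bool" where
  "piso n A RA B RB S \<longleftrightarrow> finite S \<and> S \<subseteq> A \<times> B \<and>
     (\<forall>a b a' b'. (a,b)\<in>S \<longrightarrow> (a',b')\<in>S \<longrightarrow> (\<forall>i<n. RA i a a' \<longleftrightarrow> RB i b b'))"

lemma piso_conv: "piso n A RA B RB S \<longleftrightarrow> piso n B RB A RA (S\<inverse>)"
  unfolding piso_def by auto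

lemma forth:
  assumes n: "n > 0" and lin: "\<forall>i<n. strict_linear_on A (RA i)"
    and dB: "dense_npo n B ltB RB"
    and S: "piso n A RA B RB S" and p: "p \<in> A"
  shows "\<exists>q\<in>B. piso n A RA B RB (insert (p,q) S)"
proof -
  have npoB: "npo n B ltB RB" and den: "\<forall>F l rt. finite F \<and> F \<noteq> {} \<and> F \<subseteq> B \<and> (\<forall>i<n. is_gap (RB i) F (l i) (rt i)) \<longrightarrow>
        (\<exists>u\<in>B. \<forall>i<n. above_l (RB i) (l i) u \<and> below_r (RB i) u (rt i))"
    using dB unfolding dense_npo_def by auto
  have linB: "\<forall>i<n. strict_linear_on B (RB i)" and Bne: "B \<noteq> {}" using npoB unfolding npo_def by auto
  have Sfin: "finite S" and SAB: "S \<subseteq> A \<times> B" and Sp: "\<And>a b a' b' i. (a,b)\<in>S \<Longrightarrow> (a',b')\<in>S \<Longrightarrow> i < n \<Longrightarrow> RA i a a' \<longleftrightarrow> RB i b b'"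
    using S unfolding piso_def by auto
  show ?thesis
  proof (cases "\<exists>b. (p,b) \<in> S")
    case True
    then obtain b where "(p,b) \<in> S" by auto
    moreover have "b \<in> B" using \<open>(p,b) \<in> S\<close> SAB by auto
    moreover have "insert (p,b) S = S" using \<open>(p,b) \<in> S\<close> by (rule insert_absorb)
    ultimately have "piso n A RA B RB (insert (p,b) S)" "b \<in> B" using S by simp_all
    then show ?thesis by blast
  next
    case pnot: False
    show ?thesis
    proof (cases "S = {}")
      case True
      obtain q where q: "q \<in> B" using Bne by auto
      have "piso n A RA B RB {(p,q)}" unfolding piso_def
        using q p sl_irr[OF lin[rule_format], of _ p] sl_irr[OF linB[rule_format], of _ q] by auto
      then show ?thesis using q True by auto
    next
      case Sne: False
      define Lp where "Lp i = {b. \<exists>a. (a,b)\<in>S \<and> RA i a p}" for i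
      define Up where "Up i = {b. \<exists>a. (a,b)\<in>S \<and> RA i p a}" for i
      define l where "l i = (if Lp i = {} then None else Some (SOME m. m \<in> Lp i \<and> (\<forall>x\<in>Lp i. x = m \<or> RB i x m)))" for i
      define r where "r i = (if Up i = {} then None else Some (SOME m. m \<in> Up i \<and> (\<forall>x\<in>Up i. x = m \<or> RB i m x)))" for i
      have LpS: "Lp i \<subseteq> snd ` S" "Up i \<subseteq> snd ` S" for i unfolding Lp_def Up_def by force+
      have finS: "finite (snd ` S)" using Sfin by auto
      have SB: "snd ` S \<subseteq> B" using SAB by auto
      have lS: "l i = Some m \<Longrightarrow> m \<in> Lp i \<and> (\<forall>x\<in>Lp i. x = m \<or> RB i x m)" if "i < n" for i m
      proof -
        assume h: "l i = Some m"
        then have ne: "Lp i \<noteq> {}" unfolding l_def by (auto split: if_splits)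
        have "\<exists>m. m \<in> Lp i \<and> (\<forall>x\<in>Lp i. x = m \<or> RB i x m)"
          using sl_max[OF linB[rule_format, OF that] finite_subset[OF LpS(1) finS] ne] LpS SB by blast
        from someI_ex[OF this] show ?thesis using h ne unfolding l_def by auto
      qed
      have rS: "r i = Some m \<Longrightarrow> m \<in> Up i \<and> (\<forall>x\<in>Up i. x = m \<or> RB i m x)" if "i < n" for i m
      proof -
        assume h: "r i = Some m"
        then have ne: "Up i \<noteq> {}" unfolding r_def by (auto split: if_splits)
        have "\<exists>m. m \<in> Up i \<and> (\<forall>x\<in>Up i. x = m \<or> RB i m x)"
          using sl_min[OF linB[rule_format, OF that] finite_subset[OF LpS(2) finS] ne] LpS SB by blast
        from someI_ex[OF this] show ?thesis using h ne unfolding r_def by auto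
      qed
      have lN: "l i = None \<Longrightarrow> Lp i = {}" for i unfolding l_def by (auto split: if_splits)
      have rN: "r i = None \<Longrightarrow> Up i = {}" for i unfolding r_def by (auto split: if_splits)
      have LU: "(a,b) \<in> S \<Longrightarrow> i < n \<Longrightarrow> (RA i a p \<and> b \<in> Lp i) \<or> (RA i p a \<and> b \<in> Up i)" for a b i
      proof -
        assume ab: "(a,b) \<in> S" and i: "i < n"
        have "a \<noteq> p" using ab pnot by auto
        moreover have "a \<in> A" using ab SAB by auto
        ultimately have "RA i a p \<or> RA i p a" using sl_tot[OF lin[rule_format, OF i] _ p] by blast
        then show ?thesis using ab unfolding Lp_def Up_def by blast
      qed
      have sep: "x \<in> Lp i \<Longrightarrow> y \<in> Up i \<Longrightarrow> i < n \<Longrightarrow> RB i x y" for x y i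
      proof -
        assume x: "x \<in> Lp i" and y: "y \<in> Up i" and i: "i < n"
        obtain a where a: "(a,x) \<in> S" "RA i a p" using x unfolding Lp_def by auto
        obtain a' where a': "(a',y) \<in> S" "RA i p a'" using y unfolding Up_def by auto
        have aA: "a \<in> A" "a' \<in> A" using a(1) a'(1) SAB by auto
        have "RA i a a'" using sl_trans[OF lin[rule_format, OF i] aA(1) p aA(2) a(2) a'(2)] .
        then show ?thesis using Sp[OF a(1) a'(1) i] by simp
      qed
      have gap: "is_gap (RB i) (snd ` S) (l i) (r i)" if i: "i < n" for i
      proof -
        have c1: "l i \<in> Some ` (snd ` S) \<union> {None}"
        proof (cases "l i")
          case (Some m)
          then have "m \<in> snd ` S" using lS[OF i Some] LpS(1)[of i] by blast
          then show ?thesis using Some by blast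
        qed simp
        have c2: "r i \<in> Some ` (snd ` S) \<union> {None}"
        proof (cases "r i")
          case (Some m)
          then have "m \<in> snd ` S" using rS[OF i Some] LpS(2)[of i] by blast
          then show ?thesis using Some by blast
        qed simp
        have c3: "case (l i, r i) of (Some a, Some b) \<Rightarrow> RB i a b | _ \<Rightarrow> True"
          using lS[OF i] rS[OF i] sep[OF _ _ i] by (cases "l i"; cases "r i") auto
        have c4: "\<not> (above_l (RB i) (l i) x \<and> below_r (RB i) x (r i))" if x: "x \<in> snd ` S" for x
        proof -
          obtain a where ax: "(a,x) \<in> S" using x by auto
          have xB: "x \<in> B" using x SB by auto
          note L = linB[rule_format, OF i]
          from LU[OF ax i] show ?thesis
          proof
            assume h: "RA i a p \<and> x \<in> Lp i"
            then obtain m where m: "l i = Some m" using lN by (cases "l i") auto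
            from lS[OF i m] h have "x = m \<or> RB i x m" by auto
            moreover have "m \<in> B" using lS[OF i m] LpS SB by blast
            ultimately show ?thesis using m xB sl_irr[OF L] sl_asym[OF L] unfolding above_l_def by auto
          next
            assume h: "RA i p a \<and> x \<in> Up i"
            then obtain m where m: "r i = Some m" using rN by (cases "r i") auto
            from rS[OF i m] h have "x = m \<or> RB i m x" by auto
            moreover have "m \<in> B" using rS[OF i m] LpS SB by blast
            ultimately show ?thesis using m xB sl_irr[OF L] sl_asym[OF L] unfolding below_r_def by auto
          qed
        qed
        show ?thesis unfolding is_gap_def using c1 c2 c3 c4 by blast
      qed
      obtain q where qB: "q \<in> B" and q: "\<And>i. i < n \<Longrightarrow> above_l (RB i) (l i) q \<and> below_r (RB i) q (r i)"
        using den[rule_format, of "snd ` S" l r] finS Sne SB gap by blast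
      have key: "(RA i a p \<longleftrightarrow> RB i b q) \<and> (RA i p a \<longleftrightarrow> RB i q b)" if ab: "(a,b) \<in> S" and i: "i < n" for a b i
      proof -
        note L = linB[rule_format, OF i] and LA = lin[rule_format, OF i]
        have aA: "a \<in> A" and bB: "b \<in> B" using ab SAB by auto
        from LU[OF ab i] show ?thesis
        proof
          assume h: "RA i a p \<and> b \<in> Lp i"
          then obtain m where m: "l i = Some m" using lN by (cases "l i") auto
          from lS[OF i m] h have "b = m \<or> RB i b m" by auto
          moreover have "m \<in> B" using lS[OF i m] LpS SB by blast
          moreover have "RB i m q" using q[OF i] m unfolding above_l_def by auto
          ultimately have "RB i b q" using sl_trans[OF L] bB qB by blast
          then show ?thesis using h sl_asym[OF L] sl_asym[OF LA] bB qB aA p by blast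
        next
          assume h: "RA i p a \<and> b \<in> Up i"
          then obtain m where m: "r i = Some m" using rN by (cases "r i") auto
          from rS[OF i m] h have "b = m \<or> RB i m b" by auto
          moreover have "m \<in> B" using rS[OF i m] LpS SB by blast
          moreover have "RB i q m" using q[OF i] m unfolding below_r_def by auto
          ultimately have "RB i q b" using sl_trans[OF L] bB qB by blast
          then show ?thesis using h sl_asym[OF L] sl_asym[OF LA] bB qB aA p by blast
        qed
      qed
      have "piso n A RA B RB (insert (p,q) S)"
        unfolding piso_def
      proof (intro conjI allI impI)
        show "finite (insert (p, q) S)" using Sfin by auto
        show "insert (p, q) S \<subseteq> A \<times> B" using SAB p qB by auto
        fix a b a' b' i assume h: "(a, b) \<in> insert (p, q) S" "(a', b') \<in> insert (p, q) S" "i < n"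
        have i1: "\<not> RA i p p" using sl_irr[OF lin[rule_format, OF h(3)] p] .
        have i2: "\<not> RB i q q" using sl_irr[OF linB[rule_format, OF h(3)] qB] .
        show "RA i a a' = RB i b b'"
        proof (cases "(a,b) = (p,q)")
          case True
          show ?thesis
          proof (cases "(a',b') = (p,q)")
            case True
            then show ?thesis using \<open>(a,b) = (p,q)\<close> i1 i2 by simp
          next
            case False
            then have "(a',b') \<in> S" using h(2) by auto
            from key[OF this h(3)] show ?thesis using True by simp
          qed
        next
          case False
          then have ab: "(a,b) \<in> S" using h(1) by auto
          show ?thesis
          proof (cases "(a',b') = (p,q)")
            case True
            from key[OF ab h(3)] show ?thesis using True by simp
          next
            case False
            then have "(a',b') \<in> S" using h(2) by auto
            from Sp[OF ab this h(3)] show ?thesis .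
          qed
        qed
      qed
      then show ?thesis using qB by blast
    qed
  qed
qed

lemma back_forth:
  assumes n: "n > 0" and cA: "countable A" and cB: "countable B"
    and dA: "dense_npo n A ltA RA" and dB: "dense_npo n B ltB RB"
  shows "npo_isomorphic n A ltA RA B ltB RB"
proof -
  have nA: "npo n A ltA RA" and nB: "npo n B ltB RB" using dA dB unfolding dense_npo_def by auto
  have linA: "\<forall>i<n. strict_linear_on A (RA i)" and Ane: "A \<noteq> {}"
    and ltA: "\<forall>a\<in>A. \<forall>b\<in>A. ltA a b \<longleftrightarrow> (\<forall>i<n. RA i a b)" using nA unfolding npo_def by auto
  have linB: "\<forall>i<n. strict_linear_on B (RB i)" and Bne: "B \<noteq> {}"
    and ltB: "\<forall>a\<in>B. \<forall>b\<in>B. ltB a b \<longleftrightarrow> (\<forall>i<n. RB i a b)" using nB unfolding npo_def by auto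
  let ?P = "piso n A RA B RB"
  have fw: "\<exists>q. q\<in>B \<and> ?P (insert (p,q) S)" if "?P S" "p \<in> A" for S p
    using forth[OF n linA dB that] by blast
  have bw: "\<exists>p. p\<in>A \<and> ?P (insert (p,q) S)" if "?P S" "q \<in> B" for S q
  proof -
    have "piso n B RB A RA (S\<inverse>)" using that piso_conv by blast
    from forth[OF n linB dA this that(2)] obtain p where "p \<in> A" "piso n B RB A RA (insert (q,p) (S\<inverse>))" by blast
    moreover have "insert (q,p) (S\<inverse>) = (insert (p,q) S)\<inverse>" by auto
    ultimately show ?thesis using piso_conv by metis
  qed
  define fstep where "fstep S p = insert (p, SOME q. q\<in>B \<and> ?P (insert (p,q) S)) S" for S p
  define bstep where "bstep S q = insert (SOME p. p\<in>A \<and> ?P (insert (p,q) S), q) S" for S q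
  have fs: "?P (fstep S p) \<and> S \<subseteq> fstep S p \<and> p \<in> fst ` fstep S p" if "?P S" "p \<in> A" for S p
    using someI_ex[OF fw[OF that]] unfolding fstep_def by force
  have bs: "?P (bstep S q) \<and> S \<subseteq> bstep S q \<and> q \<in> snd ` bstep S q" if "?P S" "q \<in> B" for S q
    using someI_ex[OF bw[OF that]] unfolding bstep_def by force
  define ea where "ea = from_nat_into A"
  define eb where "eb = from_nat_into B"
  have eaA: "ea k \<in> A" for k using from_nat_into[OF Ane] ea_def by auto
  have ebB: "eb k \<in> B" for k using from_nat_into[OF Bne] eb_def by auto
  define sq where "sq = rec_nat {} (\<lambda>k S. bstep (fstep S (ea k)) (eb k))"
  have sq0: "sq 0 = {}" and sqS: "sq (Suc k) = bstep (fstep (sq k) (ea k)) (eb k)" for k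
    unfolding sq_def by auto
  have inv: "?P (sq k)" for k
  proof (induction k)
    case 0 then show ?case unfolding sq0 piso_def by auto
  next
    case (Suc k) then show ?case unfolding sqS using fs bs eaA ebB by blast
  qed
  have stepmono: "sq k \<subseteq> sq (Suc k)" for k
    unfolding sqS using fs[OF inv eaA] bs[OF fs[OF inv eaA, THEN conjunct1] ebB] by blast
  have mono: "k \<le> k' \<Longrightarrow> sq k \<subseteq> sq k'" for k k'
    using lift_Suc_mono_le[of sq, OF stepmono] by blast
  define U where "U = (\<Union>k. sq k)"
  have UAB: "U \<subseteq> A \<times> B" using inv unfolding U_def piso_def by blast
  have Up: "RA i a a' \<longleftrightarrow> RB i b b'" if hh: "(a,b)\<in>U" "(a',b')\<in>U" "i < n" for a b a' b' i
  proof -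
    obtain k k' where "(a,b) \<in> sq k" "(a',b') \<in> sq k'" using hh(1,2) unfolding U_def by blast
    then have "(a,b) \<in> sq (max k k')" "(a',b') \<in> sq (max k k')" using mono[of k "max k k'"] mono[of k' "max k k'"] by auto
    then show ?thesis using inv[of "max k k'"] hh(3) unfolding piso_def by blast
  qed
  note L0 = linA[rule_format, OF n] and M0 = linB[rule_format, OF n]
  have func: "b = b'" if "(a,b)\<in>U" "(a,b')\<in>U" for a b b'
  proof (rule ccontr)
    assume "b \<noteq> b'"
    moreover have "a \<in> A" "b \<in> B" "b' \<in> B" using that UAB by auto
    ultimately show False using Up[OF that(1) that(2) n] Up[OF that(2) that(1) n] sl_irr[OF L0] sl_tot[OF M0] by blast
  qed
  have injU: "a = a'" if "(a,b)\<in>U" "(a',b)\<in>U" for a a' b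
  proof (rule ccontr)
    assume "a \<noteq> a'"
    moreover have "a \<in> A" "a' \<in> A" "b \<in> B" using that UAB by auto
    ultimately show False using Up[OF that(1) that(2) n] Up[OF that(2) that(1) n] sl_irr[OF M0] sl_tot[OF L0] by blast
  qed
  have Adom: "\<exists>b. (a,b) \<in> U" if aA: "a \<in> A" for a
  proof -
    obtain k where "ea k = a" using from_nat_into_surj[OF cA aA] ea_def by auto
    then have "a \<in> fst ` sq (Suc k)" unfolding sqS
      using fs[OF inv eaA] bs[OF fs[OF inv eaA, THEN conjunct1] ebB] by blast
    then show ?thesis unfolding U_def by force
  qed
  have Bdom: "\<exists>a. (a,b) \<in> U" if bB: "b \<in> B" for b
  proof -
    obtain k where "eb k = b" using from_nat_into_surj[OF cB bB] eb_def by auto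
    then have "b \<in> snd ` sq (Suc k)" unfolding sqS
      using fs[OF inv eaA] bs[OF fs[OF inv eaA, THEN conjunct1] ebB] by blast
    then show ?thesis unfolding U_def by force
  qed
  define f where "f a = (SOME b. (a,b) \<in> U)" for a
  have fU: "(a, f a) \<in> U" if "a \<in> A" for a unfolding f_def using someI_ex[OF Adom[OF that]] .
  have "npo_iso n A ltA RA B ltB RB f"
    unfolding npo_iso_def
  proof (intro conjI ballI)
    show "bij_betw f A B" unfolding bij_betw_def
    proof
      show "inj_on f A" using fU injU by (metis inj_onI)
      show "f ` A = B"
      proof
        show "f ` A \<subseteq> B" using fU UAB by blast
        show "B \<subseteq> f ` A"
        proof
          fix b assume "b \<in> B"
          then obtain a where ab: "(a,b) \<in> U" using Bdom by blast
          then have "a \<in> A" using UAB by auto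
          then have "f a = b" using func[OF fU ab] by simp
          then show "b \<in> f ` A" using \<open>a \<in> A\<close> by blast
        qed
      qed
    qed
    fix a b assume ab: "a \<in> A" "b \<in> A"
    have fb: "f a \<in> B" "f b \<in> B" using fU ab UAB by auto
    have R: "\<forall>i<n. RA i a b \<longleftrightarrow> RB i (f a) (f b)" using Up[OF fU[OF ab(1)] fU[OF ab(2)]] by blast
    then show "\<forall>i<n. RA i a b \<longleftrightarrow> RB i (f a) (f b)" .
    show "ltA a b \<longleftrightarrow> ltB (f a) (f b)" using ltA ltB ab fb R by auto
  qed
  then show ?thesis unfolding npo_isomorphic_def by blast
qed

lemma D_dense:
  fixes n :: nat and D :: "rat list set"
  assumes n2: "n \<ge> 2"
    and DV: "D \<subseteq> rat_vecs n"
    and dQ: "dense_in_Qn n D"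
    and dist: "\<forall>x\<in>D. \<forall>y\<in>D. x \<noteq> y \<longrightarrow> (\<forall>i<n. x ! i \<noteq> y ! i)"
  shows "dense_npo n D (prod_lt n) coord_lt"
proof -
  have n: "0 < n" using n2 by auto
  have box: "\<exists>d\<in>D. \<forall>i<n. lo i < d ! i \<and> d ! i < hi i" if "\<And>i. i < n \<Longrightarrow> lo i < hi i" for lo hi
    using dQ[unfolded dense_in_Qn_def, rule_format, of "map lo [0..<n]" "map hi [0..<n]"] that by auto
  have Dne: "D \<noteq> {}" using box[of "\<lambda>_. 0" "\<lambda>_. 1"] by auto
  have lin: "strict_linear_on D (coord_lt i)" if "i < n" for i
    unfolding strict_linear_on_def coord_lt_def using dist that by (metis less_trans linorder_neqE order.irrefl)
  have plt: "prod_lt n a b \<longleftrightarrow> (\<forall>i<n. coord_lt i a b)" if "a \<in> D" "b \<in> D" for a b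
  proof
    assume "prod_lt n a b"
    then show "\<forall>i<n. coord_lt i a b" unfolding prod_lt_def coord_lt_def using dist that by force
  next
    assume h: "\<forall>i<n. coord_lt i a b"
    then have "a \<noteq> b" using n unfolding coord_lt_def by auto
    then show "prod_lt n a b" using h unfolding prod_lt_def coord_lt_def by (simp add: less_imp_le)
  qed
  have dens: "\<exists>u\<in>D. \<forall>i<n. above_l (coord_lt i) (l i) u \<and> below_r (coord_lt i) u (rt i)"
    if g: "\<forall>i<n. is_gap (coord_lt i) F (l i) (rt i)" for F l rt
  proof -
    define lo where "lo i = (case l i of None \<Rightarrow> (case rt i of None \<Rightarrow> 0 | Some b \<Rightarrow> b ! i - 1) | Some a \<Rightarrow> a ! i)" for i
    define hi where "hi i = (case rt i of None \<Rightarrow> lo i + 1 | Some b \<Rightarrow> b ! i)" for i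
    have lohi: "lo i < hi i" if i: "i < n" for i
    proof -
      have "case (l i, rt i) of (Some a, Some b) \<Rightarrow> coord_lt i a b | _ \<Rightarrow> True"
        using g i unfolding is_gap_def by blast
      then show ?thesis unfolding lo_def hi_def coord_lt_def
        by (cases "l i"; cases "rt i") auto
    qed
    from box[of lo hi, OF lohi] obtain d where "d \<in> D" "\<forall>i<n. lo i < d ! i \<and> d ! i < hi i" by blast
    moreover have "above_l (coord_lt i) (l i) d \<and> below_r (coord_lt i) d (rt i)"
      if "lo i < d ! i \<and> d ! i < hi i" for i
      using that unfolding above_l_def below_r_def coord_lt_def lo_def hi_def
      by (cases "l i"; cases "rt i") auto
    ultimately show ?thesis by blast
  qed
  show ?thesis unfolding dense_npo_def npo_def using Dne lin plt dens by blast
qed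

theorem theorem4p5:
  fixes n :: nat and D :: "rat list set"
  assumes "n \<ge> 2"
    and "D \<subseteq> rat_vecs n"
    and "dense_in_Qn n D"
    and "\<forall>x\<in>D. \<forall>y\<in>D. x \<noteq> y \<longrightarrow> (\<forall>i<n. x ! i \<noteq> y ! i)"
  shows "countable D \<and> dense_npo n D (prod_lt n) coord_lt \<and>
    (\<forall>(P :: 'a set) lt R. countable P \<and> dense_npo n P lt R \<longrightarrow>
        npo_isomorphic n P lt R D (prod_lt n) coord_lt)"
proof -
  have c: "countable D" by (rule countableI_type)
  have d: "dense_npo n D (prod_lt n) coord_lt" using D_dense assms by blast
  have "0 < n" using assms(1) by auto
  then show ?thesis using c d back_forth by blast
qed

end
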